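(* For all real $a,r$ with $0<a<1$, $0<r<1$ and $a\neq r$, $$\frac12(a^2+1)^2\left[\frac{1}{(ar+1)^2(a-r)^2}+\frac{1}{(r+a)^2(ar-1)^2}\right]-\frac{(1-r^2)r}{(1+r^2)^4}>0.$$ *)

theory Defs
  imports Complex_Main
begin

end

theory Submission
  imports Defs
begin

theorem lemma1:
  fixes a r :: real
  assumes "0 < a" "a < 1" "0 < r" "r < 1" "a \<noteq> r"
  shows "1/2 * (a^2 + 1)^2 * (1 / ((a*r + 1)^2 * (a - r)^2) + 1 / ((r + a)^2 * (a*r - 1)^2))
           - (1 - r^2) * r / (1 + r^2)^4 > 0"
proof -
  have ar0: "0 < a*r" using assms by simp
  have "a*r < 1*1" by (rule mult_strict_mono) (use assms in auto)
  hence ar: "0 < a*r" "a*r < 1" using ar0 by auto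
  have "(a*r+1)^2 < 2^2" by (rule power_strict_mono) (use ar in auto)
  hence h1: "(a*r+1)^2 < 4" by simp
  have h2: "(a-r)^2 < 1" using assms by (subst abs_square_less_1) auto
  have h2': "(a-r)^2 > 0" using assms by simp
  have A0: "0 < (a*r + 1)^2 * (a - r)^2" using h2' ar by simp
  have A4: "(a*r + 1)^2 * (a - r)^2 < 4"
  proof -
    have "(a*r + 1)^2 * (a - r)^2 < 4 * 1"
      by (rule mult_strict_mono) (use h1 h2 h2' in auto)
    thus ?thesis by simp
  qed
  have "(r+a)^2 < 2^2" by (rule power_strict_mono) (use assms in auto)
  hence h3: "(r+a)^2 < 4" by simp
  have h4: "(a*r-1)^2 < 1" using ar by (subst abs_square_less_1) auto
  have h4': "(a*r-1)^2 > 0" using ar by simp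
  have B0: "0 < (r + a)^2 * (a*r - 1)^2" using h4' assms by simp
  have B4: "(r + a)^2 * (a*r - 1)^2 < 4"
  proof -
    have "(r + a)^2 * (a*r - 1)^2 < 4 * 1"
      by (rule mult_strict_mono) (use h3 h4 h4' in auto)
    thus ?thesis by simp
  qed
  have iA: "1 / ((a*r + 1)^2 * (a - r)^2) > 1/4"
    using A0 A4 by (simp add: divide_simps)
  have iB: "1 / ((r + a)^2 * (a*r - 1)^2) > 1/4"
    using B0 B4 by (simp add: divide_simps)
  have S: "(a^2 + 1)^2 \<ge> (1::real)"
    by (rule one_le_power) simp
  have L: "1/2 * (a^2 + 1)^2 * (1 / ((a*r + 1)^2 * (a - r)^2) + 1 / ((r + a)^2 * (a*r - 1)^2)) > 1/4"
  proof -
    have "1/2 * (1 / ((a*r + 1)^2 * (a - r)^2) + 1 / ((r + a)^2 * (a*r - 1)^2)) > 1/4"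
      using iA iB by simp
    moreover have "1/2 * (a^2 + 1)^2 * (1 / ((a*r + 1)^2 * (a - r)^2) + 1 / ((r + a)^2 * (a*r - 1)^2))
       \<ge> 1/2 * (1 / ((a*r + 1)^2 * (a - r)^2) + 1 / ((r + a)^2 * (a*r - 1)^2))"
    proof -
      have g: "\<And>x y::real. x \<ge> 1 \<Longrightarrow> y > 0 \<Longrightarrow> 1/2 * x * y \<ge> 1/2 * y"
        by (simp add: mult_le_cancel_right1)
      show ?thesis using g[OF S, of "1 / ((a*r + 1)^2 * (a - r)^2) + 1 / ((r + a)^2 * (a*r - 1)^2)"] iA iB
        by linarith
    qed
    ultimately show ?thesis by linarith
  qed
  have P: "(1 + r^2)^4 \<ge> 1 + 4*r^2"
  proof -
    have "(1 + r^2)^4 = 1 + 4*r^2 + 6*r^4 + 4*r^6 + r^8" by algebra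
    thus ?thesis by (simp add: zero_le_even_power)
  qed
  have Q: "4*((1 - r^2) * r) < 1 + 4*r^2"
  proof -
    have "0 \<le> (2*r-1)^2" by simp
    hence e: "4*r \<le> 1 + 4*r^2" by (simp add: power2_eq_square algebra_simps)
    have "0 < r^2 * r" using assms by simp
    moreover have "4*((1 - r^2) * r) = 4*r - 4*(r^2*r)" by (simp add: algebra_simps)
    ultimately show ?thesis using e by linarith
  qed
  have R: "(1 - r^2) * r / (1 + r^2)^4 < 1/4"
  proof -
    have p1: "1 + r^2 > 0" by (simp add: add_pos_nonneg)
    hence pos: "(1 + r^2)^4 > 0" by simp
    have "4*((1 - r^2) * r) < (1 + r^2)^4" using P Q by linarith
    thus ?thesis using pos by (simp add: divide_simps)
  qed
  show ?thesis using L R by linarith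
qed

end
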